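(* Let $\mathcal H$ be the set of pairs $(g,h)$ of Markov policies $g,h:\mathcal X\to\{0,1\}$ with $N^{(g)}(x)\ge N^{(h)}(x)$ for all $x$. Consider (C1): for every $(g,h)\in\mathcal H$ and all $x,z\in\mathcal X$, $\sum_{y}\{[\beta P_{zy}(1)-P_{xy}(1)]^+N^{(g)}(y)-[P_{xy}(1)-\beta P_{zy}(1)]^+N^{(h)}(y)\}\le(1-\beta)^2/\beta$; (C2): for every $(g,h)\in\mathcal H$ and all $x\in\mathcal X$, $\sum_{y}\{[P_{xy}(0)-P_{xy}(1)]^+N^{(g)}(y)-[P_{xy}(1)-P_{xy}(0)]^+N^{(h)}(y)\}\le(1-\beta)/\beta$. Then each of the following implies (C1): (a) $\max_{x,z\in\mathcal X}\sum_{y\in\mathcal X}[\beta P_{zy}(1)-P_{xy}(1)]^+\le(1-\beta)^2/\beta$; (b) $P_{xy}(1)=P_{zy}(1)$ for all $x,y,z\in\mathcal X$. And each of the following implies (C2): (c) $\max_{x\in\mathcal X}\sum_{y\in\mathcal X}[P_{xy}(0)-P_{xy}(1)]^+\le(1-\beta)/\beta$; (d) $\beta\le 0.5$.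
   Context: A restless bandit consists of a finite or countable state space $\mathcal X$, actions $\{0,1\}$, transition matrices $P(0),P(1)$ on $\mathcal X$ ($P_{xy}(a)$ = probability of moving from $x$ to $y$ under action $a$), and a cost function; $\beta\in(0,1)$ is a discount factor. $[u]^+=\max\{u,0\}$. For a Markov policy $g:\mathcal X\to\{0,1\}$ (with $X_{t+1}$ drawn from $P_{X_t\,\cdot}(g(X_t))$), $N^{(g)}(x)=(1-\beta)\mathbb E[\sum_{t\ge0}\beta^t g(X_t)\mid X_0=x]$. *)

theory Defs
  imports "HOL-Analysis.Analysis"
begin

text \<open>Actions are encoded as booleans: True = action 1 (activate), False = action 0.
  A transition kernel is P :: bool => 'x => 'x => real, with P a x y the probability
  of moving from x to y under action a.\<close>

definition stochastic :: "('x \<Rightarrow> 'x \<Rightarrow> real) \<Rightarrow> bool" where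
  "stochastic Q \<longleftrightarrow> (\<forall>x y. 0 \<le> Q x y) \<and> (\<forall>x. ((\<lambda>y. Q x y) has_sum 1) UNIV)"

fun step_prob :: "(bool \<Rightarrow> 'x \<Rightarrow> 'x \<Rightarrow> real) \<Rightarrow> ('x \<Rightarrow> bool) \<Rightarrow> nat \<Rightarrow> 'x \<Rightarrow> 'x \<Rightarrow> real" where
  "step_prob P g 0 x y = (if x = y then 1 else 0)"
| "step_prob P g (Suc t) x y = (\<Sum>\<^sub>\<infinity>z. step_prob P g t x z * P (g z) z y)"

text \<open>N^(g)(x) = (1-beta) E[ sum_t beta^t g(X_t) | X_0 = x ], with the expectation
  E[g(X_t) | X_0 = x] written out as sum_y P^t_{xy} g(y).\<close>
definition Nval :: "real \<Rightarrow> (bool \<Rightarrow> 'x \<Rightarrow> 'x \<Rightarrow> real) \<Rightarrow> ('x \<Rightarrow> bool) \<Rightarrow> 'x \<Rightarrow> real" where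
  "Nval \<beta> P g x = (1 - \<beta>) * (\<Sum>t. \<beta> ^ t * (\<Sum>\<^sub>\<infinity>y. step_prob P g t x y * of_bool (g y)))"

definition posp :: "real \<Rightarrow> real" where
  "posp u = max u 0"

definition Hset :: "real \<Rightarrow> (bool \<Rightarrow> 'x \<Rightarrow> 'x \<Rightarrow> real) \<Rightarrow> (('x \<Rightarrow> bool) \<times> ('x \<Rightarrow> bool)) set" where
  "Hset \<beta> P = {(g, h). \<forall>x. Nval \<beta> P g x \<ge> Nval \<beta> P h x}"

definition C1 :: "real \<Rightarrow> (bool \<Rightarrow> 'x \<Rightarrow> 'x \<Rightarrow> real) \<Rightarrow> bool" where
  "C1 \<beta> P \<longleftrightarrow> (\<forall>(g, h) \<in> Hset \<beta> P. \<forall>x z.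
     (\<Sum>\<^sub>\<infinity>y. posp (\<beta> * P True z y - P True x y) * Nval \<beta> P g y
               - posp (P True x y - \<beta> * P True z y) * Nval \<beta> P h y)
     \<le> (1 - \<beta>)\<^sup>2 / \<beta>)"

definition C2 :: "real \<Rightarrow> (bool \<Rightarrow> 'x \<Rightarrow> 'x \<Rightarrow> real) \<Rightarrow> bool" where
  "C2 \<beta> P \<longleftrightarrow> (\<forall>(g, h) \<in> Hset \<beta> P. \<forall>x.
     (\<Sum>\<^sub>\<infinity>y. posp (P False x y - P True x y) * Nval \<beta> P g y
               - posp (P True x y - P False x y) * Nval \<beta> P h y)
     \<le> (1 - \<beta>) / \<beta>)"

end

theory Submission
  imports Defs
begin

lemma infsum_finite_sum_swap:
  fixes h :: "'a \<Rightarrow> 'b \<Rightarrow> real"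
  assumes "finite F" "\<And>y. (\<lambda>z. h z y) summable_on UNIV"
  shows "(\<Sum>y\<in>F. \<Sum>\<^sub>\<infinity>z. h z y) = (\<Sum>\<^sub>\<infinity>z. \<Sum>y\<in>F. h z y)
         \<and> (\<lambda>z. \<Sum>y\<in>F. h z y) summable_on UNIV"
  using assms(1)
proof (induction F rule: finite_induct)
  case empty
  then show ?case by simp
next
  case (insert y F)
  then show ?case
    using assms(2)[of y]
    by (simp add: infsum_add summable_on_add)
qed

lemma stoch_le1:
  assumes "stochastic Q" "finite F"
  shows "sum (Q z) F \<le> 1"
proof -
  have "((\<lambda>y. Q z y) has_sum 1) UNIV" "\<forall>y. 0 \<le> Q z y" using assms(1) unfolding stochastic_def by auto
  then show ?thesis using finite_sum_le_has_sum[where f="Q z" and S=1 and A=UNIV and B=F] assms(2) by auto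
qed

lemma stoch_summable:
  assumes "stochastic Q"
  shows "Q z summable_on UNIV"
  using assms unfolding stochastic_def by (metis has_sum_imp_summable)

lemma stoch_pt_le1:
  assumes "stochastic Q"
  shows "Q z y \<le> 1"
  using stoch_le1[OF assms, of "{y}" z] by simp

lemma step_prob_bound:
  assumes stoch: "\<And>a. stochastic (P a)"
  shows "(\<forall>y. 0 \<le> step_prob P g t x y) \<and> (\<forall>F. finite F \<longrightarrow> sum (step_prob P g t x) F \<le> 1)"
proof (induction t)
  case 0
  have "sum (step_prob P g 0 x) F \<le> 1" if "finite F" for F
  proof -
    have "sum (step_prob P g 0 x) F = (\<Sum>y\<in>F. if x = y then 1 else 0)" by simp
    also have "\<dots> = (if x \<in> F then 1 else 0)" using that by (simp add: sum.delta)
    finally show ?thesis by simp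
  qed
  then show ?case by simp
next
  case (Suc t)
  let ?s = "step_prob P g t x"
  have nn: "\<And>y. 0 \<le> ?s y" using Suc by blast
  have sm: "?s summable_on UNIV"
    apply (rule nonneg_bdd_above_summable_on)
    using Suc by (auto simp: bdd_above_def)
  have nnP: "\<And>a z y. 0 \<le> P a z y" using stoch unfolding stochastic_def by blast
  have sm2: "(\<lambda>z. ?s z * P (g z) z y) summable_on UNIV" for y
    apply (rule summable_on_comparison_test[OF sm])
    using nn nnP stoch_pt_le1[OF stoch] by (auto intro: mult_left_le mult_nonneg_nonneg)
  have "0 \<le> step_prob P g (Suc t) x y" for y
    by (simp, rule infsum_nonneg, simp add: nn nnP)
  moreover have "sum (step_prob P g (Suc t) x) F \<le> 1" if fin: "finite F" for F
  proof -
    have "sum (step_prob P g (Suc t) x) F = (\<Sum>y\<in>F. \<Sum>\<^sub>\<infinity>z. ?s z * P (g z) z y)" by simp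
    also have "\<dots> = (\<Sum>\<^sub>\<infinity>z. \<Sum>y\<in>F. ?s z * P (g z) z y)"
      using infsum_finite_sum_swap[where h="\<lambda>z y. ?s z * P (g z) z y", OF fin sm2] by blast
    also have "\<dots> \<le> (\<Sum>\<^sub>\<infinity>z. ?s z)"
    proof (rule infsum_mono)
      show "(\<lambda>z. \<Sum>y\<in>F. ?s z * P (g z) z y) summable_on UNIV"
        using infsum_finite_sum_swap[where h="\<lambda>z y. ?s z * P (g z) z y", OF fin sm2] by blast
      show "?s summable_on UNIV" by (rule sm)
      fix z
      have "(\<Sum>y\<in>F. ?s z * P (g z) z y) = ?s z * sum (P (g z) z) F"
        by (simp add: sum_distrib_left)
      also have "\<dots> \<le> ?s z" using nn stoch_le1[OF stoch fin] by (simp add: mult_left_le)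
      finally show "(\<Sum>y\<in>F. ?s z * P (g z) z y) \<le> ?s z" .
    qed
    also have "\<dots> \<le> 1"
      by (rule infsum_le_finite_sums[OF sm]) (use Suc in blast)
    finally show ?thesis .
  qed
  ultimately show ?case by blast
qed

lemma Nval_bounds:
  assumes beta: "0 < \<beta>" "\<beta> < 1"
    and stoch: "\<And>a. stochastic (P a)"
  shows "0 \<le> Nval \<beta> P g x \<and> Nval \<beta> P g x \<le> 1"
proof -
  define a where "a t = (\<Sum>\<^sub>\<infinity>y. step_prob P g t x y * of_bool (g y))" for t
  have a01: "0 \<le> a t \<and> a t \<le> 1" for t
  proof -
    have B: "(\<forall>y. 0 \<le> step_prob P g t x y) \<and> (\<forall>F. finite F \<longrightarrow> sum (step_prob P g t x) F \<le> 1)"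
      by (rule step_prob_bound[OF stoch])
    have nn: "0 \<le> step_prob P g t x y * of_bool (g y)" for y using B by simp
    have sm: "step_prob P g t x summable_on UNIV"
      apply (rule nonneg_bdd_above_summable_on) using B by (auto simp: bdd_above_def)
    have sm2: "(\<lambda>y. step_prob P g t x y * of_bool (g y)) summable_on UNIV"
      apply (rule summable_on_comparison_test[OF sm]) using B nn by auto
    have "a t \<le> (\<Sum>\<^sub>\<infinity>y. step_prob P g t x y)"
      unfolding a_def by (rule infsum_mono[OF sm2 sm]) (use B in auto)
    also have "\<dots> \<le> 1" by (rule infsum_le_finite_sums[OF sm]) (use B in blast)
    finally have "a t \<le> 1" .
    moreover have "0 \<le> a t" unfolding a_def by (rule infsum_nonneg) (rule nn)
    ultimately show ?thesis by simp
  qed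
  have geo: "summable (\<lambda>t. \<beta> ^ t)" using beta by (simp add: summable_geometric)
  have bt: "0 \<le> \<beta> ^ t * a t \<and> \<beta> ^ t * a t \<le> \<beta> ^ t" for t
  proof -
    have p: "0 \<le> \<beta> ^ t" using beta by simp
    show ?thesis using a01[of t] mult_left_le[of "a t" "\<beta> ^ t"] p by simp
  qed
  have sm: "summable (\<lambda>t. \<beta> ^ t * a t)"
    apply (rule summable_comparison_test'[OF geo, where N=0])
    using bt by simp
  have "(\<Sum>t. \<beta> ^ t * a t) \<le> (\<Sum>t. \<beta> ^ t)"
    apply (rule suminf_le[OF _ sm geo]) using bt by blast
  also have "\<dots> = 1 / (1 - \<beta>)" using beta by (simp add: suminf_geometric)
  finally have up: "(\<Sum>t. \<beta> ^ t * a t) \<le> 1 / (1 - \<beta>)" .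
  have lo: "0 \<le> (\<Sum>t. \<beta> ^ t * a t)"
    apply (rule suminf_nonneg[OF sm]) using bt by blast
  have "Nval \<beta> P g x = (1 - \<beta>) * (\<Sum>t. \<beta> ^ t * a t)" unfolding Nval_def a_def by simp
  moreover have "(1 - \<beta>) * (\<Sum>t. \<beta> ^ t * a t) \<le> 1"
  proof -
    have "(1 - \<beta>) * (\<Sum>t. \<beta> ^ t * a t) \<le> (1 - \<beta>) * (1 / (1 - \<beta>))"
      using up beta by (intro mult_left_mono) auto
    also have "\<dots> = 1" using beta by simp
    finally show ?thesis .
  qed
  ultimately show ?thesis using lo beta by simp
qed

lemma key_bound:
  fixes f g N1 N2 :: "'a \<Rightarrow> real"
  assumes fs: "f summable_on UNIV" and gs: "g summable_on UNIV"
    and f0: "\<And>y. 0 \<le> f y" and g0: "\<And>y. 0 \<le> g y"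
    and N1: "\<And>y. 0 \<le> N1 y \<and> N1 y \<le> 1" and N2: "\<And>y. 0 \<le> N2 y \<and> N2 y \<le> 1"
  shows "(\<Sum>\<^sub>\<infinity>y. f y * N1 y - g y * N2 y) \<le> (\<Sum>\<^sub>\<infinity>y. f y)"
proof -
  have s1: "(\<lambda>y. f y * N1 y) summable_on UNIV"
    apply (rule summable_on_comparison_test[OF fs]) using f0 N1 by (auto simp: mult_left_le)
  have s2: "(\<lambda>y. g y * N2 y) summable_on UNIV"
    apply (rule summable_on_comparison_test[OF gs]) using g0 N2 by (auto simp: mult_left_le)
  have s3: "(\<lambda>y. f y * N1 y - g y * N2 y) summable_on UNIV"
    using summable_on_add[OF s1 summable_on_uminus[THEN iffD2, OF s2]] by simp
  show ?thesis
  proof (rule infsum_mono[OF s3 fs])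
    fix y
    have "f y * N1 y \<le> f y" using f0[of y] N1[of y] mult_left_le by blast
    moreover have "0 \<le> g y * N2 y" using g0[of y] N2[of y] by simp
    ultimately show "f y * N1 y - g y * N2 y \<le> f y" by linarith
  qed
qed


lemma C1_from:
  fixes P :: "bool \<Rightarrow> 'x \<Rightarrow> 'x \<Rightarrow> real" and \<beta> :: real
  assumes beta: "0 < \<beta>" "\<beta> < 1"
    and stoch: "\<And>a. stochastic (P a)"
    and A: "\<forall>x z. (\<Sum>\<^sub>\<infinity>y. posp (\<beta> * P True z y - P True x y)) \<le> (1 - \<beta>)\<^sup>2 / \<beta>"
  shows "C1 \<beta> P"
proof -
  have nnP: "\<And>a z y. 0 \<le> P a z y" using stoch unfolding stochastic_def by blast
  have NB: "\<And>g y. 0 \<le> Nval \<beta> P g y \<and> Nval \<beta> P g y \<le> 1"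
    using Nval_bounds[where P=P, OF beta stoch] by blast
  have main: "(\<Sum>\<^sub>\<infinity>y. posp (\<beta> * P True z y - P True x y) * Nval \<beta> P g y
               - posp (P True x y - \<beta> * P True z y) * Nval \<beta> P h y)
     \<le> (1 - \<beta>)\<^sup>2 / \<beta>" for g h x z
  proof -
    have fs: "(\<lambda>y. posp (\<beta> * P True z y - P True x y)) summable_on UNIV"
      apply (rule summable_on_comparison_test[OF summable_on_cmult_right[where c=\<beta>, OF stoch_summable[OF stoch[of True], of z]]])
      using nnP beta by (auto simp: posp_def)
    have gs: "(\<lambda>y. posp (P True x y - \<beta> * P True z y)) summable_on UNIV"
      apply (rule summable_on_comparison_test[OF stoch_summable[OF stoch[of True], of x]])
      using nnP beta by (auto simp: posp_def)
    have "(\<Sum>\<^sub>\<infinity>y. posp (\<beta> * P True z y - P True x y) * Nval \<beta> P g y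
               - posp (P True x y - \<beta> * P True z y) * Nval \<beta> P h y)
          \<le> (\<Sum>\<^sub>\<infinity>y. posp (\<beta> * P True z y - P True x y))"
      by (rule key_bound[OF fs gs]) (auto simp: posp_def NB)
    also have "\<dots> \<le> (1 - \<beta>)\<^sup>2 / \<beta>" using A by blast
    finally show ?thesis .
  qed
  show ?thesis unfolding C1_def using main by auto
qed

lemma C2_from:
  fixes P :: "bool \<Rightarrow> 'x \<Rightarrow> 'x \<Rightarrow> real" and \<beta> :: real
  assumes beta: "0 < \<beta>" "\<beta> < 1"
    and stoch: "\<And>a. stochastic (P a)"
    and A: "\<forall>x. (\<Sum>\<^sub>\<infinity>y. posp (P False x y - P True x y)) \<le> (1 - \<beta>) / \<beta>"
  shows "C2 \<beta> P"
proof -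
  have nnP: "\<And>a z y. 0 \<le> P a z y" using stoch unfolding stochastic_def by blast
  have NB: "\<And>g y. 0 \<le> Nval \<beta> P g y \<and> Nval \<beta> P g y \<le> 1"
    using Nval_bounds[where P=P, OF beta stoch] by blast
  have main: "(\<Sum>\<^sub>\<infinity>y. posp (P False x y - P True x y) * Nval \<beta> P g y
               - posp (P True x y - P False x y) * Nval \<beta> P h y)
     \<le> (1 - \<beta>) / \<beta>" for g h x
  proof -
    have fs: "(\<lambda>y. posp (P False x y - P True x y)) summable_on UNIV"
      apply (rule summable_on_comparison_test[OF stoch_summable[OF stoch[of False], of x]])
      using nnP by (auto simp: posp_def)
    have gs: "(\<lambda>y. posp (P True x y - P False x y)) summable_on UNIV"
      apply (rule summable_on_comparison_test[OF stoch_summable[OF stoch[of True], of x]])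
      using nnP by (auto simp: posp_def)
    have "(\<Sum>\<^sub>\<infinity>y. posp (P False x y - P True x y) * Nval \<beta> P g y
               - posp (P True x y - P False x y) * Nval \<beta> P h y)
          \<le> (\<Sum>\<^sub>\<infinity>y. posp (P False x y - P True x y))"
      by (rule key_bound[OF fs gs]) (auto simp: posp_def NB)
    also have "\<dots> \<le> (1 - \<beta>) / \<beta>" using A by blast
    finally show ?thesis .
  qed
  show ?thesis unfolding C2_def using main by auto
qed

theorem proposition2:
  fixes P :: "bool \<Rightarrow> 'x::countable \<Rightarrow> 'x \<Rightarrow> real" and \<beta> :: real
  assumes beta: "0 < \<beta>" "\<beta> < 1"
    and stoch: "\<And>a. stochastic (P a)"
  shows "((\<forall>x z. (\<Sum>\<^sub>\<infinity>y. posp (\<beta> * P True z y - P True x y)) \<le> (1 - \<beta>)\<^sup>2 / \<beta>) \<longrightarrow> C1 \<beta> P)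
       \<and> ((\<forall>x y z. P True x y = P True z y) \<longrightarrow> C1 \<beta> P)
       \<and> ((\<forall>x. (\<Sum>\<^sub>\<infinity>y. posp (P False x y - P True x y)) \<le> (1 - \<beta>) / \<beta>) \<longrightarrow> C2 \<beta> P)
       \<and> (\<beta> \<le> 1/2 \<longrightarrow> C2 \<beta> P)"
proof (intro conjI impI)
  have nnP: "\<And>a z y. 0 \<le> P a z y" using stoch unfolding stochastic_def by blast
  show "C1 \<beta> P" if "\<forall>x z. (\<Sum>\<^sub>\<infinity>y. posp (\<beta> * P True z y - P True x y)) \<le> (1 - \<beta>)\<^sup>2 / \<beta>"
    using C1_from[where P=P, OF beta stoch that] .
  show "C1 \<beta> P" if H: "\<forall>x y z. P True x y = P True z y"
  proof (rule C1_from[where P=P, OF beta stoch], intro allI)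
    fix x z
    have "posp (\<beta> * P True z y - P True x y) = 0" for y
    proof -
      have "P True z y = P True x y" using H by metis
      moreover have "\<beta> * P True x y \<le> P True x y"
        using nnP[of True x y] beta mult_left_le_one_le[of "P True x y" \<beta>] by simp
      ultimately show ?thesis by (simp add: posp_def)
    qed
    then have "(\<Sum>\<^sub>\<infinity>y. posp (\<beta> * P True z y - P True x y)) = 0" by simp
    moreover have "0 \<le> (1 - \<beta>)\<^sup>2 / \<beta>" using beta by simp
    ultimately show "(\<Sum>\<^sub>\<infinity>y. posp (\<beta> * P True z y - P True x y)) \<le> (1 - \<beta>)\<^sup>2 / \<beta>" by simp
  qed
  show "C2 \<beta> P" if "\<forall>x. (\<Sum>\<^sub>\<infinity>y. posp (P False x y - P True x y)) \<le> (1 - \<beta>) / \<beta>"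
    using C2_from[where P=P, OF beta stoch that] .
  show "C2 \<beta> P" if H: "\<beta> \<le> 1/2"
  proof (rule C2_from[where P=P, OF beta stoch], intro allI)
    fix x
    have fs: "(\<lambda>y. posp (P False x y - P True x y)) summable_on UNIV"
      apply (rule summable_on_comparison_test[OF stoch_summable[OF stoch[of False], of x]])
      using nnP by (auto simp: posp_def)
    have "(\<Sum>\<^sub>\<infinity>y. posp (P False x y - P True x y)) \<le> (\<Sum>\<^sub>\<infinity>y. P False x y)"
      by (rule infsum_mono[OF fs stoch_summable[OF stoch]]) (use nnP in \<open>auto simp: posp_def\<close>)
    also have "\<dots> = 1" using stoch[of False] unfolding stochastic_def by (metis infsumI)
    also have "1 \<le> (1 - \<beta>) / \<beta>" using beta H by (simp add: field_simps)
    finally show "(\<Sum>\<^sub>\<infinity>y. posp (P False x y - P True x y)) \<le> (1 - \<beta>) / \<beta>" .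
  qed
qed

end
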